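(* Let $P\subset\mathbb R^d$ be a $d$-polytope in general position, and let $P=P_1\cup\dots\cup P_k$ be a triangulation of $P$ into $d$-simplices whose vertices are all vertices of $P$ (the $P_i$ having pairwise intersections contained in their boundaries). Then for every $x\in\mathbb R^d$, $\mathbf 1_{\Omega(P)}(x)=\sum_{i=1}^k\mathbf 1_{\Omega(P_i)}(x)$. In particular $|\mathcal L(\Omega(P))|=\sum_{i=1}^k|\mathcal L(\Omega(P_i))|$.
   Context: For $k\ge1$, $\pi:\mathbb R^k\to\mathbb R^{k-1}$ forgets the last coordinate and $\pi^{(j)}$ forgets the last $j$ coordinates. For a compact $S\subset\mathbb R^k$ and $y\in\pi(S)$, $n(y,S)$ is the point of $S\cap\pi^{-1}(y)$ with smallest last coordinate, $NB(S)=\{n(y,S):y\in\pi(S)\}$, and $\Omega(S)=S\setminus NB(S)$; $\mathcal L(S)=S\cap\mathbb Z^k$; $\mathbf 1_A$ is the indicator function. A $d$-polytope $P$ with vertex set $V$ is in general position if for every $0\le k\le d-1$ and every $(k+1)$-subset $U\subset V$, $\pi^{(d-k)}(\mathrm{conv}(U))$ is a $k$-simplex. *)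

theory Defs
  imports Complex_Main "HOL-Library.Indicator_Function"
begin

text \<open>Points of R^k are represented as functions nat => real vanishing at all
  coordinates i >= k (coordinates 0..k-1; the last coordinate is k-1).\<close>

definition Rn :: "nat \<Rightarrow> (nat \<Rightarrow> real) set" where
  "Rn k = {x. \<forall>i\<ge>k. x i = 0}"

definition projn :: "nat \<Rightarrow> nat \<Rightarrow> (nat \<Rightarrow> real) \<Rightarrow> (nat \<Rightarrow> real)" where
  "projn k j x = (\<lambda>i. if i < k - j then x i else 0)"

definition conv :: "(nat \<Rightarrow> real) set \<Rightarrow> (nat \<Rightarrow> real) set" where
  "conv U = {y. \<exists>c. (\<forall>v\<in>U. 0 \<le> c v) \<and> (\<Sum>v\<in>U. c v) = 1 \<and>
                     y = (\<lambda>i. \<Sum>v\<in>U. c v * v i)}"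

definition aff_indep :: "(nat \<Rightarrow> real) set \<Rightarrow> bool" where
  "aff_indep W \<longleftrightarrow> finite W \<and>
     (\<forall>c. (\<Sum>w\<in>W. c w) = 0 \<and> (\<lambda>i. \<Sum>w\<in>W. c w * w i) = (\<lambda>i. 0) \<longrightarrow> (\<forall>w\<in>W. c w = 0))"

definition is_simplex :: "nat \<Rightarrow> (nat \<Rightarrow> real) set \<Rightarrow> bool" where
  "is_simplex k S \<longleftrightarrow> (\<exists>W. W \<subseteq> Rn k \<and> aff_indep W \<and> card W = k + 1 \<and> S = conv W)"

definition vertices :: "(nat \<Rightarrow> real) set \<Rightarrow> (nat \<Rightarrow> real) set" where
  "vertices P = {v\<in>P. \<not> (\<exists>a\<in>P. \<exists>b\<in>P. \<exists>t::real. a \<noteq> b \<and> 0 < t \<and> t < 1 \<and>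
                      v = (\<lambda>i. (1 - t) * a i + t * b i))}"

definition is_polytope :: "nat \<Rightarrow> (nat \<Rightarrow> real) set \<Rightarrow> bool" where
  "is_polytope d P \<longleftrightarrow> (\<exists>V. finite V \<and> V \<subseteq> Rn d \<and> P = conv V) \<and>
     (\<exists>W. W \<subseteq> P \<and> aff_indep W \<and> card W = d + 1)"

definition general_position :: "nat \<Rightarrow> (nat \<Rightarrow> real) set \<Rightarrow> bool" where
  "general_position d P \<longleftrightarrow>
     (\<forall>k U. k \<le> d - 1 \<longrightarrow> U \<subseteq> vertices P \<longrightarrow> card U = k + 1 \<longrightarrow>
        is_simplex k (projn d (d - k) ` conv U))"

definition interior_d :: "nat \<Rightarrow> (nat \<Rightarrow> real) set \<Rightarrow> (nat \<Rightarrow> real) set" where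
  "interior_d d S = {x\<in>S. \<exists>e>0. \<forall>y\<in>Rn d. (\<Sum>i<d. (y i - x i)^2) < e^2 \<longrightarrow> y \<in> S}"

definition closure_d :: "nat \<Rightarrow> (nat \<Rightarrow> real) set \<Rightarrow> (nat \<Rightarrow> real) set" where
  "closure_d d S = {x\<in>Rn d. \<forall>e>0. \<exists>y\<in>S. (\<Sum>i<d. (y i - x i)^2) < e^2}"

definition boundary_d :: "nat \<Rightarrow> (nat \<Rightarrow> real) set \<Rightarrow> (nat \<Rightarrow> real) set" where
  "boundary_d d S = closure_d d S - interior_d d S"

text \<open>NB(S) for S in R^k: x is n(pi x, S), i.e. the point of the fibre of x
  with smallest last coordinate (coordinate k-1).\<close>
definition NB :: "nat \<Rightarrow> (nat \<Rightarrow> real) set \<Rightarrow> (nat \<Rightarrow> real) set" where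
  "NB k S = {x\<in>S. \<forall>x'\<in>S. projn k 1 x' = projn k 1 x \<longrightarrow> x (k - 1) \<le> x' (k - 1)}"

definition Omega :: "nat \<Rightarrow> (nat \<Rightarrow> real) set \<Rightarrow> (nat \<Rightarrow> real) set" where
  "Omega k S = S - NB k S"

definition lattice_pts :: "nat \<Rightarrow> (nat \<Rightarrow> real) set \<Rightarrow> (nat \<Rightarrow> real) set" where
  "lattice_pts k S = {x\<in>S. \<forall>i<k. x i \<in> \<int>}"

end

theory Submission
  imports Defs "HOL-Library.Function_Algebras" "HOL-Library.Infinite_Set"
begin

definition sc :: "real \<Rightarrow> (nat \<Rightarrow> real) \<Rightarrow> (nat \<Rightarrow> real)" where
  "sc c f = (\<lambda>i. c * f i)"

interpretation fv: vector_space sc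
  by unfold_locales (auto simp: sc_def algebra_simps fun_eq_iff)

lemma sum_apply_fun: "(sum g A) (i::nat) = (\<Sum>a\<in>A. (g a :: nat \<Rightarrow> real) i)"
  by (induction A rule: infinite_finite_induct) auto

definition hm :: "(nat \<Rightarrow> real) \<Rightarrow> (nat \<Rightarrow> real)" where
  "hm v = (\<lambda>i. if i = 0 then 1 else v (i - 1))"

lemma inj_hm: "inj hm"
proof
  fix a b assume "hm a = hm b"
  then have "\<And>i. hm a (Suc i) = hm b (Suc i)" by simp
  then show "a = b" by (auto simp: hm_def fun_eq_iff)
qed

lemma hm_indep:
  assumes "aff_indep S"
  shows "fv.independent (hm ` S)"
proof (rule fv.independent_if_scalars_zero)
  have fin: "finite S" using assms aff_indep_def by blast
  then show "finite (hm ` S)" by simp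
  fix f x
  assume s: "(\<Sum>x\<in>hm ` S. sc (f x) x) = 0" and x: "x \<in> hm ` S"
  have s2: "(\<Sum>s\<in>S. sc (f (hm s)) (hm s)) = 0"
    using s by (simp add: sum.reindex inj_on_subset[OF inj_hm])
  have "(\<Sum>s\<in>S. (\<lambda>s. f (hm s)) s) = 0"
  proof -
    have "(\<Sum>s\<in>S. sc (f (hm s)) (hm s)) 0 = 0" using s2 by simp
    then show ?thesis by (simp add: sum_apply_fun sc_def hm_def)
  qed
  moreover have "(\<lambda>i. \<Sum>s\<in>S. f (hm s) * s i) = (\<lambda>i. 0)"
  proof
    fix i
    have "(\<Sum>s\<in>S. sc (f (hm s)) (hm s)) (Suc i) = 0" using s2 by simp
    then show "(\<Sum>s\<in>S. f (hm s) * s i) = 0" by (simp add: sum_apply_fun sc_def hm_def)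
  qed
  ultimately have "\<forall>s\<in>S. f (hm s) = 0" using assms unfolding aff_indep_def by blast
  then show "f x = 0" using x by auto
qed

lemma card_aff_indep_le:
  assumes "aff_indep W" "finite A"
    and "W \<subseteq> {y. \<exists>c. sum c A = 1 \<and> y = (\<lambda>i. \<Sum>a\<in>A. c a * f a i)}"
  shows "card W \<le> card A"
proof -
  have "hm ` W \<subseteq> fv.span (hm ` f ` A)"
  proof
    fix z assume "z \<in> hm ` W"
    then obtain y where y: "y \<in> W" "z = hm y" by auto
    then obtain c where c: "sum c A = 1" "y = (\<lambda>i. \<Sum>a\<in>A. c a * f a i)" using assms(3) by blast
    have "z = (\<Sum>a\<in>A. sc (c a) (hm (f a)))"
      by (auto simp: fun_eq_iff sum_apply_fun sc_def hm_def y c)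
    also have "\<dots> \<in> fv.span (hm ` f ` A)"
      by (intro fv.span_sum fv.span_scale fv.span_base) auto
    finally show "z \<in> fv.span (hm ` f ` A)" .
  qed
  then have "card (hm ` W) \<le> card (hm ` f ` A)"
    using fv.independent_span_bound[OF _ hm_indep[OF assms(1)]] assms(2) by auto
  also have "\<dots> \<le> card A" using assms(2) by (metis card_image_le finite_imageI le_trans)
  finally show ?thesis by (simp add: card_image inj_on_subset[OF inj_hm])
qed

definition ee :: "nat \<Rightarrow> nat \<Rightarrow> real" where "ee k = (\<lambda>i. if i = k then 1 else 0)"

lemma card_aff_indep_Rn:
  assumes "aff_indep W" "W \<subseteq> Rn d"
  shows "card W \<le> d + 1"
proof -
  have "hm ` W \<subseteq> fv.span (ee ` {..<d+1})"
  proof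
    fix z assume "z \<in> hm ` W"
    then obtain y where y: "y \<in> W" "z = hm y" by auto
    have "z = (\<Sum>k<d+1. sc (z k) (ee k))"
    proof
      fix i
      have "z i = (if i < d + 1 then z i else 0)"
        using y assms(2) by (auto simp: hm_def Rn_def)
      moreover have "(\<Sum>k<d+1. z k * (if i = k then 1 else 0)) = (if i < d + 1 then z i else 0)"
        by (simp add: if_distrib[where f="\<lambda>x. _ * x"] sum.delta cong: if_cong)
      ultimately show "z i = (\<Sum>k<d+1. sc (z k) (ee k)) i"
        by (simp add: sum_apply_fun sc_def ee_def)
    qed
    also have "\<dots> \<in> fv.span (ee ` {..<d+1})"
      by (intro fv.span_sum fv.span_scale fv.span_base) auto
    finally show "z \<in> fv.span (ee ` {..<d+1})" .
  qed
  then have "card (hm ` W) \<le> card (ee ` {..<d+1})"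
    using fv.independent_span_bound[OF _ hm_indep[OF assms(1)]] by auto
  also have "\<dots> \<le> d + 1" by (metis card_image_le card_lessThan finite_lessThan)
  finally show ?thesis by (simp add: card_image inj_on_subset[OF inj_hm])
qed


definition aff :: "(nat \<Rightarrow> real) set \<Rightarrow> (nat \<Rightarrow> real) set" where
  "aff W = {y. \<exists>c. sum c W = 1 \<and> y = (\<lambda>i. \<Sum>v\<in>W. c v * v i)}"

lemma aff_unique:
  assumes "aff_indep W" "sum c W = 1" "sum c' W = 1"
    "(\<lambda>i. \<Sum>v\<in>W. c v * v i) = (\<lambda>i. \<Sum>v\<in>W. c' v * v i)" "w \<in> W"
  shows "c w = c' w"
proof -
  have "(\<Sum>v\<in>W. c v - c' v) = 0" using assms by (simp add: sum_subtractf)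
  moreover have "(\<lambda>i. \<Sum>v\<in>W. (c v - c' v) * v i) = (\<lambda>i. 0)"
  proof
    fix i
    have "(\<Sum>v\<in>W. c v * v i) = (\<Sum>v\<in>W. c' v * v i)" using assms(4) by meson
    then show "(\<Sum>v\<in>W. (c v - c' v) * v i) = 0"
      by (simp add: left_diff_distrib sum_subtractf)
  qed
  ultimately have "\<forall>v\<in>W. (\<lambda>v. c v - c' v) v = 0"
    using assms(1) unfolding aff_indep_def by blast
  then show ?thesis using assms(5) by simp
qed

lemma aff_extend:
  assumes "aff_indep W" "y \<notin> aff W"
  shows "aff_indep (insert y W)"
proof -
  have fin: "finite W" using assms(1) aff_indep_def by blast
  have yW: "y \<notin> W"
  proof
    assume "y \<in> W"
    then have "y \<in> aff W"
    proof -
      assume yW: "y \<in> W"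
      have "sum (\<lambda>v. if v = y then 1 else 0) W = (1::real)" using fin yW by (simp add: sum.delta')
      moreover have "y = (\<lambda>i. \<Sum>v\<in>W. (if v = y then 1 else 0) * v i)"
        using fin yW by (simp add: if_distrib[where f="\<lambda>x. x * _"] sum.delta' cong: if_cong)
      ultimately show ?thesis unfolding aff_def by blast
    qed
    then show False using assms(2) by simp
  qed
  show ?thesis unfolding aff_indep_def
  proof (intro conjI allI impI)
    show "finite (insert y W)" using fin by simp
    fix c assume c: "sum c (insert y W) = 0 \<and> (\<lambda>i. \<Sum>w\<in>insert y W. c w * w i) = (\<lambda>i. 0)"
    have s: "c y + sum c W = 0" using c fin yW by simp
    have l: "\<And>i. c y * y i + (\<Sum>w\<in>W. c w * w i) = 0"
      using c fin yW by (metis (no_types, lifting) sum.insert)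
    have cy: "c y = 0"
    proof (rule ccontr)
      assume ne: "c y \<noteq> 0"
      have "y \<in> aff W" unfolding aff_def
      proof (intro CollectI exI conjI)
        show "sum (\<lambda>v. - c v / c y) W = 1"
        proof -
          have "sum (\<lambda>v. - c v / c y) W = - sum c W / c y"
            by (simp add: sum_negf sum_divide_distrib)
          also have "\<dots> = 1" using s ne by (simp add: eq_neg_iff_add_eq_0[symmetric] )
          finally show ?thesis .
        qed
        show "y = (\<lambda>i. \<Sum>v\<in>W. - c v / c y * v i)"
        proof
          fix i
          have "(\<Sum>v\<in>W. - c v / c y * v i) = - (\<Sum>w\<in>W. c w * w i) / c y"
            by (simp add: sum_negf sum_divide_distrib)
          also have "\<dots> = y i" using l[of i] ne by (simp add: field_simps)
          finally show "y i = (\<Sum>v\<in>W. - c v / c y * v i)" by simp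
        qed
      qed
      then show False using assms(2) by simp
    qed
    have s0: "sum c W = 0" using s cy by simp
    have l0: "(\<lambda>i. \<Sum>w\<in>W. c w * w i) = (\<lambda>i. 0)" using l cy by simp
    have "\<forall>w\<in>W. c w = 0"
      using assms(1) s0 l0 unfolding aff_indep_def by blast
    then show "\<forall>w\<in>insert y W. c w = 0" using cy by simp
  qed
qed


lemma conv_Rn:
  assumes "W \<subseteq> Rn d" shows "conv W \<subseteq> Rn d"
proof
  fix y assume "y \<in> conv W"
  then obtain c where c: "y = (\<lambda>i. \<Sum>v\<in>W. c v * v i)" unfolding conv_def by blast
  show "y \<in> Rn d" using assms unfolding Rn_def c by (auto intro!: sum.neutral)
qed

lemma lc_comb: fixes V :: "(nat \<Rightarrow> real) set" and s t :: real shows "(\<Sum>v\<in>V. (s * a v + t * b v) * v i) = s * (\<Sum>v\<in>V. a v * v (i::nat)) + t * (\<Sum>v\<in>V. b v * v i)"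
  by (simp add: distrib_right sum.distrib sum_distrib_left mult.assoc)

lemma conv_convex:
  assumes "finite V" "p \<in> conv V" "q \<in> conv V" "0 \<le> t" "t \<le> 1"
  shows "(\<lambda>i. (1 - t) * p i + t * q i) \<in> conv V"
proof -
  obtain a where a: "\<forall>v\<in>V. 0 \<le> a v" "sum a V = 1" "p = (\<lambda>i. \<Sum>v\<in>V. a v * v i)"
    using assms(2) unfolding conv_def by blast
  obtain b where b: "\<forall>v\<in>V. 0 \<le> b v" "sum b V = 1" "q = (\<lambda>i. \<Sum>v\<in>V. b v * v i)"
    using assms(3) unfolding conv_def by blast
  show ?thesis unfolding conv_def
  proof (intro CollectI exI conjI)
    show "\<forall>v\<in>V. 0 \<le> (1 - t) * a v + t * b v" using a b assms by auto
    show "(\<Sum>v\<in>V. (1 - t) * a v + t * b v) = 1"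
      using a b by (simp add: sum.distrib flip: sum_distrib_left)
    show "(\<lambda>i. (1 - t) * p i + t * q i) = (\<lambda>i. \<Sum>v\<in>V. ((1 - t) * a v + t * b v) * v i)"
      unfolding a b by (simp only: lc_comb)
  qed
qed

lemma subset_conv: "w \<in> W \<Longrightarrow> finite W \<Longrightarrow> w \<in> conv W"
  unfolding conv_def
  by (rule CollectI, rule exI[where x="\<lambda>v. if v = w then 1 else 0"])
     (auto simp: sum.delta' if_distrib[where f="\<lambda>x. x * _"] cong: if_cong)

locale smp =
  fixes d :: nat and W :: "(nat \<Rightarrow> real) set"
  assumes WRn: "W \<subseteq> Rn d" and Wai: "aff_indep W" and Wcard: "card W = d + 1"
begin

lemma finW: "finite W" using Wai aff_indep_def by blast

lemma in_aff: assumes "y \<in> Rn d" shows "y \<in> aff W"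
proof (rule ccontr)
  assume "y \<notin> aff W"
  then have ai: "aff_indep (insert y W)" using aff_extend Wai by blast
  have "y \<notin> W"
  proof
    assume "y \<in> W"
    then have "y \<in> aff W" unfolding aff_def using finW
      by (intro CollectI exI[where x="\<lambda>v. if v = y then 1 else 0"])
         (auto simp: sum.delta' if_distrib[where f="\<lambda>x. x * _"] cong: if_cong)
    then show False using \<open>y \<notin> aff W\<close> by simp
  qed
  then have "card (insert y W) = d + 2" using finW Wcard by simp
  moreover have "card (insert y W) \<le> d + 1"
    using card_aff_indep_Rn[OF ai] WRn assms by auto
  ultimately show False by simp
qed

definition bc :: "(nat \<Rightarrow> real) \<Rightarrow> (nat \<Rightarrow> real) \<Rightarrow> real" where
  "bc y = (SOME c. sum c W = 1 \<and> y = (\<lambda>i. \<Sum>v\<in>W. c v * v i))"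

lemma bc: assumes "y \<in> Rn d"
  shows "sum (bc y) W = 1" "y = (\<lambda>i. \<Sum>v\<in>W. bc y v * v i)"
proof -
  have "\<exists>c. sum c W = 1 \<and> y = (\<lambda>i. \<Sum>v\<in>W. c v * v i)" using in_aff[OF assms] aff_def by blast
  then have "sum (bc y) W = 1 \<and> y = (\<lambda>i. \<Sum>v\<in>W. bc y v * v i)"
    unfolding bc_def by (rule someI_ex)
  then show "sum (bc y) W = 1" "y = (\<lambda>i. \<Sum>v\<in>W. bc y v * v i)" by auto
qed

lemma bc_unique:
  assumes "sum c W = 1" "y = (\<lambda>i. \<Sum>v\<in>W. c v * v i)" "w \<in> W"
  shows "bc y w = c w"
proof -
  have y: "y \<in> Rn d" using assms(2) WRn unfolding Rn_def by (auto intro!: sum.neutral)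
  show ?thesis using aff_unique[OF Wai bc(1)[OF y] assms(1) _ assms(3)] bc(2)[OF y] assms(2) by simp
qed

lemma conv_iff: "y \<in> conv W \<longleftrightarrow> y \<in> Rn d \<and> (\<forall>w\<in>W. 0 \<le> bc y w)"
proof
  assume y: "y \<in> conv W"
  then have yR: "y \<in> Rn d" using conv_Rn[OF WRn] by blast
  obtain c where c: "\<forall>v\<in>W. 0 \<le> c v" "sum c W = 1" "y = (\<lambda>i. \<Sum>v\<in>W. c v * v i)"
    using y unfolding conv_def by blast
  show "y \<in> Rn d \<and> (\<forall>w\<in>W. 0 \<le> bc y w)" using yR c bc_unique[OF c(2,3)] by auto
next
  assume "y \<in> Rn d \<and> (\<forall>w\<in>W. 0 \<le> bc y w)"
  then show "y \<in> conv W" unfolding conv_def using bc by blast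
qed

lemma bc_comb:
  assumes "p \<in> Rn d" "q \<in> Rn d" "w \<in> W"
  shows "bc (\<lambda>i. (1 - t) * p i + t * q i) w = (1 - t) * bc p w + t * bc q w"
proof (rule bc_unique[OF _ _ assms(3)])
  show "(\<Sum>v\<in>W. (1 - t) * bc p v + t * bc q v) = 1"
    using bc(1)[OF assms(1)] bc(1)[OF assms(2)] by (simp add: sum.distrib flip: sum_distrib_left)
  have p: "\<And>i. p i = (\<Sum>v\<in>W. bc p v * v i)" using bc(2)[OF assms(1)] by meson
  have q: "\<And>i. q i = (\<Sum>v\<in>W. bc q v * v i)" using bc(2)[OF assms(2)] by meson
  show "(\<lambda>i. (1 - t) * p i + t * q i) = (\<lambda>i. \<Sum>v\<in>W. ((1 - t) * bc p v + t * bc q v) * v i)"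
    by (simp only: lc_comb p[symmetric] q[symmetric])
qed

lemma bc_expand:
  assumes y: "y \<in> Rn d" and z: "z \<in> Rn d" and w: "w \<in> W"
  shows "bc z w = bc y w + (\<Sum>k<d. (z k - y k) * (bc (\<lambda>i. y i + ee k i) w - bc y w))"
proof -
  let ?yk = "\<lambda>k. (\<lambda>i. y i + ee k i)"
  have ykR: "\<And>k. k < d \<Longrightarrow> ?yk k \<in> Rn d" using y by (auto simp: Rn_def ee_def)
  let ?c = "\<lambda>v. bc y v + (\<Sum>k<d. (z k - y k) * (bc (?yk k) v - bc y v))"
  show ?thesis
  proof (rule bc_unique[of ?c, OF _ _ w])
    have "(\<Sum>v\<in>W. ?c v) = (\<Sum>v\<in>W. bc y v) + (\<Sum>k<d. (z k - y k) * ((\<Sum>v\<in>W. bc (?yk k) v) - (\<Sum>v\<in>W. bc y v)))"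
    proof -
      have "(\<Sum>k<d. (z k - y k) * ((\<Sum>v\<in>W. bc (?yk k) v) - (\<Sum>v\<in>W. bc y v)))
          = (\<Sum>k<d. \<Sum>v\<in>W. (z k - y k) * (bc (?yk k) v - bc y v))"
        by (simp add: right_diff_distrib sum_distrib_left sum_subtractf)
      also have "\<dots> = (\<Sum>v\<in>W. \<Sum>k<d. (z k - y k) * (bc (?yk k) v - bc y v))"
        by (rule sum.swap)
      finally show ?thesis by (simp add: sum.distrib)
    qed
    also have "\<dots> = 1" using bc(1)[OF y] bc(1)[OF ykR] by simp
    finally show "(\<Sum>v\<in>W. ?c v) = 1" .
    show "z = (\<lambda>i. \<Sum>v\<in>W. ?c v * v i)"
    proof
      fix i
      have e1: "(\<Sum>v\<in>W. ?c v * v i) = (\<Sum>v\<in>W. bc y v * v i) + (\<Sum>k<d. (z k - y k) * ((\<Sum>v\<in>W. bc (?yk k) v * v i) - (\<Sum>v\<in>W. bc y v * v i)))"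
        by (simp add: algebra_simps sum.distrib sum_distrib_left sum_subtractf sum.swap[of _ W])
      have yi: "\<And>j. y j = (\<Sum>v\<in>W. bc y v * v j)" using bc(2)[OF y] by meson
      have yki: "\<And>k j. k < d \<Longrightarrow> ?yk k j = (\<Sum>v\<in>W. bc (?yk k) v * v j)"
        using bc(2)[OF ykR] by meson
      have "(\<Sum>v\<in>W. ?c v * v i) = y i + (\<Sum>k<d. (z k - y k) * (?yk k i - y i))"
        unfolding e1 yi[symmetric] by (intro arg_cong2[where f="(+)"] refl sum.cong) (simp_all add: yki[symmetric])
      also have "\<dots> = y i + (\<Sum>k<d. (if i = k then z k - y k else 0))"
        by (simp add: ee_def if_distrib[where f="\<lambda>x. _ * x"] cong: if_cong)
      also have "\<dots> = z i" using y z by (auto simp: Rn_def sum.delta)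
      finally show "z i = (\<Sum>v\<in>W. ?c v * v i)" by simp
    qed
  qed
qed

lemma conv_facet:
  assumes y: "y \<in> conv W" and w: "w \<in> W" and z: "bc y w = 0"
  shows "y \<in> conv (W - {w})"
proof -
  have yR: "y \<in> Rn d" and nn: "\<forall>v\<in>W. 0 \<le> bc y v" using conv_iff y by auto
  have "sum (bc y) (W - {w}) = 1" using bc(1)[OF yR] z finW w by (simp add: sum.remove)
  moreover have "y = (\<lambda>i. \<Sum>v\<in>W - {w}. bc y v * v i)"
  proof
    fix i
    have "y i = (\<Sum>v\<in>W. bc y v * v i)" using bc(2)[OF yR] by meson
    also have "\<dots> = (\<Sum>v\<in>W - {w}. bc y v * v i)" using z finW w by (simp add: sum.remove)
    finally show "y i = (\<Sum>v\<in>W - {w}. bc y v * v i)" .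
  qed
  ultimately show ?thesis unfolding conv_def using nn by blast
qed

lemma interior:
  assumes y: "y \<in> Rn d" and pos: "\<forall>w\<in>W. 0 < bc y w"
  shows "y \<in> interior_d d (conv W)"
proof -
  let ?g = "\<lambda>k w. bc (\<lambda>i. y i + ee k i) w - bc y w"
  define G where "G = 1 + (\<Sum>w\<in>W. \<Sum>k<d. \<bar>?g k w\<bar>)"
  have Wne: "W \<noteq> {}" using Wcard by auto
  define \<delta> where "\<delta> = Min (bc y ` W)"
  have dpos: "0 < \<delta>" unfolding \<delta>_def using finW Wne pos by simp
  have dle: "\<And>w. w \<in> W \<Longrightarrow> \<delta> \<le> bc y w" unfolding \<delta>_def using finW by simp
  have Gpos: "1 \<le> G" unfolding G_def by (simp add: sum_nonneg)
  define \<epsilon> where "\<epsilon> = \<delta> / G"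
  have epos: "0 < \<epsilon>" unfolding \<epsilon>_def using dpos Gpos by simp
  have yc: "y \<in> conv W" using conv_iff y pos by (simp add: less_imp_le)
  show ?thesis unfolding interior_d_def
  proof (intro CollectI conjI yc exI[of _ \<epsilon>] epos ballI impI)
    fix z assume z: "z \<in> Rn d" and dist: "(\<Sum>i<d. (z i - y i)^2) < \<epsilon>^2"
    have hk: "\<And>k. k < d \<Longrightarrow> \<bar>z k - y k\<bar> \<le> \<epsilon>"
    proof -
      fix k assume k: "k < d"
      have "(z k - y k)^2 \<le> (\<Sum>i<d. (z i - y i)^2)"
        using k by (intro member_le_sum) auto
      then have "\<bar>z k - y k\<bar>^2 < \<epsilon>^2" using dist by simp
      then show "\<bar>z k - y k\<bar> \<le> \<epsilon>" using epos by (meson less_imp_le power_less_imp_less_base)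
    qed
    have "\<forall>w\<in>W. 0 \<le> bc z w"
    proof
      fix w assume w: "w \<in> W"
      have "\<bar>\<Sum>k<d. (z k - y k) * ?g k w\<bar> \<le> (\<Sum>k<d. \<bar>(z k - y k) * ?g k w\<bar>)"
        by (rule sum_abs)
      also have "\<dots> \<le> (\<Sum>k<d. \<epsilon> * \<bar>?g k w\<bar>)"
        using hk by (intro sum_mono) (auto simp: abs_mult intro: mult_right_mono)
      also have "\<dots> = \<epsilon> * (\<Sum>k<d. \<bar>?g k w\<bar>)" by (simp add: sum_distrib_left)
      also have "\<dots> \<le> \<epsilon> * (G - 1)"
      proof -
        have "(\<Sum>k<d. \<bar>?g k w\<bar>) \<le> (\<Sum>w\<in>W. \<Sum>k<d. \<bar>?g k w\<bar>)"
          using w finW by (intro member_le_sum) (auto intro: sum_nonneg)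
        then show ?thesis using epos unfolding G_def by simp
      qed
      also have "\<dots> < \<epsilon> * G" using epos by simp
      also have "\<dots> = \<delta>" unfolding \<epsilon>_def using Gpos by simp
      also have "\<dots> \<le> bc y w" using dle w by simp
      finally have "\<bar>\<Sum>k<d. (z k - y k) * ?g k w\<bar> < bc y w" .
      then show "0 \<le> bc z w" unfolding bc_expand[OF y z w] by linarith
    qed
    then show "z \<in> conv W" using conv_iff z by simp
  qed
qed

end


lemma sum_single:
  assumes "finite W" "w \<in> W" "\<And>v. v \<in> W \<Longrightarrow> v \<noteq> w \<Longrightarrow> g v = (0::real)"
  shows "sum g W = g w"
proof -
  have "sum g W = g w + sum g (W - {w})" using assms by (simp add: sum.remove)
  also have "sum g (W - {w}) = 0" using assms by (intro sum.neutral) auto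
  finally show ?thesis by simp
qed

lemma vert_conv:
  assumes ai: "aff_indep W" and w: "w \<in> W"
  shows "w \<in> vertices (conv W)"
proof -
  have fin: "finite W" using ai aff_indep_def by blast
  have wc: "w \<in> conv W" using subset_conv[OF w fin] .
  have delta1: "sum (\<lambda>v. if v = w then 1 else 0) W = (1::real)" using fin w by (simp add: sum.delta')
  have delta2: "w = (\<lambda>i. \<Sum>v\<in>W. (if v = w then 1 else 0) * v i)"
    using fin w by (simp add: if_distrib[where f="\<lambda>x. x * _"] sum.delta' cong: if_cong)
  {
    fix a b t assume a: "a \<in> conv W" and b: "b \<in> conv W" and ab: "a \<noteq> b"
      and t: "0 < t" "t < 1" and weq: "w = (\<lambda>i. (1 - t) * a i + t * b i)"
    obtain \<alpha> where \<alpha>: "\<forall>v\<in>W. 0 \<le> \<alpha> v" "sum \<alpha> W = 1" "a = (\<lambda>i. \<Sum>v\<in>W. \<alpha> v * v i)"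
      using a unfolding conv_def by blast
    obtain \<beta> where \<beta>: "\<forall>v\<in>W. 0 \<le> \<beta> v" "sum \<beta> W = 1" "b = (\<lambda>i. \<Sum>v\<in>W. \<beta> v * v i)"
      using b unfolding conv_def by blast
    have s1: "(\<Sum>v\<in>W. (1 - t) * \<alpha> v + t * \<beta> v) = 1"
      using \<alpha> \<beta> by (simp add: sum.distrib flip: sum_distrib_left)
    have l1: "w = (\<lambda>i. \<Sum>v\<in>W. ((1 - t) * \<alpha> v + t * \<beta> v) * v i)"
      unfolding weq \<alpha>(3) \<beta>(3) by (simp only: lc_comb)
    have eq: "\<And>v. v \<in> W \<Longrightarrow> (1 - t) * \<alpha> v + t * \<beta> v = (if v = w then 1 else 0)"
      using aff_unique[OF ai s1 delta1] l1 delta2 by metis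
    have z: "\<And>v. v \<in> W \<Longrightarrow> v \<noteq> w \<Longrightarrow> \<alpha> v = 0 \<and> \<beta> v = 0"
    proof -
      fix v assume v: "v \<in> W" "v \<noteq> w"
      have "(1 - t) * \<alpha> v + t * \<beta> v = 0" using eq[OF v(1)] v(2) by simp
      moreover have "0 \<le> (1 - t) * \<alpha> v" "0 \<le> t * \<beta> v" using \<alpha>(1) \<beta>(1) v t by auto
      ultimately have "(1 - t) * \<alpha> v = 0" "t * \<beta> v = 0" by linarith+
      then show "\<alpha> v = 0 \<and> \<beta> v = 0" using t by auto
    qed
    have "a = w"
    proof
      fix i
      have "\<alpha> w = 1" using \<alpha>(2) sum_single[OF fin w, of \<alpha>] z by auto
      moreover have "a i = \<alpha> w * w i" unfolding \<alpha>(3) using sum_single[OF fin w, of "\<lambda>v. \<alpha> v * v i"] z by auto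
      ultimately show "a i = w i" by simp
    qed
    moreover have "b = w"
    proof
      fix i
      have "\<beta> w = 1" using \<beta>(2) sum_single[OF fin w, of \<beta>] z by auto
      moreover have "b i = \<beta> w * w i" unfolding \<beta>(3) using sum_single[OF fin w, of "\<lambda>v. \<beta> v * v i"] z by auto
      ultimately show "b i = w i" by simp
    qed
    ultimately have False using ab by simp
  }
  then show ?thesis unfolding vertices_def using wc by blast
qed

lemma facet_inj:
  assumes d1: "d \<ge> 1" and fin: "finite U" and cU: "card U = d"
    and a: "a \<in> conv U" and b: "b \<in> conv U" and ab: "a \<noteq> b"
    and pab: "projn d 1 a = projn d 1 b"
  shows "\<not> is_simplex (d - 1) (projn d 1 ` conv U)"
proof
  assume "is_simplex (d - 1) (projn d 1 ` conv U)"
  then obtain W' where W': "W' \<subseteq> Rn (d - 1)" "aff_indep W'" "card W' = d - 1 + 1"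
      "projn d 1 ` conv U = conv W'" unfolding is_simplex_def by blast
  obtain \<alpha> where \<alpha>: "\<forall>v\<in>U. 0 \<le> \<alpha> v" "sum \<alpha> U = 1" "a = (\<lambda>i. \<Sum>v\<in>U. \<alpha> v * v i)"
    using a unfolding conv_def by blast
  obtain \<beta> where \<beta>: "\<forall>v\<in>U. 0 \<le> \<beta> v" "sum \<beta> U = 1" "b = (\<lambda>i. \<Sum>v\<in>U. \<beta> v * v i)"
    using b unfolding conv_def by blast
  define \<mu> where "\<mu> = (\<lambda>v. \<alpha> v - \<beta> v)"
  obtain u1 where u1: "u1 \<in> U" "\<mu> u1 \<noteq> 0"
  proof (rule ccontr)
    assume "\<not> thesis"
    with that have "\<forall>v\<in>U. \<alpha> v = \<beta> v" unfolding \<mu>_def by auto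
    then have "a = b" unfolding \<alpha>(3) \<beta>(3) by (auto intro!: sum.cong)
    then show False using ab by simp
  qed
  have smu: "sum \<mu> U = 0" unfolding \<mu>_def using \<alpha>(2) \<beta>(2) by (simp add: sum_subtractf)
  have lmu: "\<And>i. i < d - 1 \<Longrightarrow> (\<Sum>v\<in>U. \<mu> v * v i) = 0"
  proof -
    fix i assume i: "i < d - 1"
    have "a i = b i" using fun_cong[OF pab, of i] i by (simp add: projn_def)
    then show "(\<Sum>v\<in>U. \<mu> v * v i) = 0" unfolding \<mu>_def \<alpha>(3) \<beta>(3)
      by (simp add: left_diff_distrib sum_subtractf)
  qed
  let ?U' = "U - {u1}"
  have sub: "W' \<subseteq> {y. \<exists>c. sum c ?U' = 1 \<and> y = (\<lambda>i. \<Sum>u\<in>?U'. c u * projn d 1 u i)}"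
  proof
    fix y assume "y \<in> W'"
    then have "y \<in> conv W'" using subset_conv W'(2) aff_indep_def by blast
    then obtain z where z: "z \<in> conv U" "y = projn d 1 z" using W'(4) by blast
    obtain \<gamma> where \<gamma>: "sum \<gamma> U = 1" "z = (\<lambda>i. \<Sum>v\<in>U. \<gamma> v * v i)"
      using z(1) unfolding conv_def by blast
    define c where "c = (\<lambda>u. \<gamma> u - \<gamma> u1 / \<mu> u1 * \<mu> u)"
    show "y \<in> {y. \<exists>c. sum c ?U' = 1 \<and> y = (\<lambda>i. \<Sum>u\<in>?U'. c u * projn d 1 u i)}"
    proof (intro CollectI exI conjI)
      have "sum c ?U' = sum \<gamma> ?U' - \<gamma> u1 / \<mu> u1 * sum \<mu> ?U'"
        unfolding c_def by (simp add: sum_subtractf sum_distrib_left)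
      also have "\<dots> = (1 - \<gamma> u1) - \<gamma> u1 / \<mu> u1 * (0 - \<mu> u1)"
        using \<gamma>(1) smu fin u1(1) by (simp add: sum_diff1)
      also have "\<dots> = 1" using u1(2) by simp
      finally show "sum c ?U' = 1" .
      show "y = (\<lambda>i. \<Sum>u\<in>?U'. c u * projn d 1 u i)"
      proof
        fix i
        show "y i = (\<Sum>u\<in>?U'. c u * projn d 1 u i)"
        proof (cases "i < d - 1")
          case True
          have "(\<Sum>u\<in>?U'. c u * projn d 1 u i) = (\<Sum>u\<in>?U'. c u * u i)"
            using True by (simp add: projn_def)
          also have "\<dots> = (\<Sum>u\<in>?U'. \<gamma> u * u i) - \<gamma> u1 / \<mu> u1 * (\<Sum>u\<in>?U'. \<mu> u * u i)"
            unfolding c_def by (simp add: left_diff_distrib sum_subtractf sum_distrib_left mult.assoc)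
          also have "\<dots> = (z i - \<gamma> u1 * u1 i) - \<gamma> u1 / \<mu> u1 * (0 - \<mu> u1 * u1 i)"
            using \<gamma>(2) lmu[OF True] fin u1(1) by (simp add: sum_diff1)
          also have "\<dots> = z i" using u1(2) by simp
          also have "\<dots> = y i" using z(2) True by (simp add: projn_def)
          finally show ?thesis by simp
        next
          case False
          then show ?thesis using z(2) by (simp add: projn_def)
        qed
      qed
    qed
  qed
  have "card W' \<le> card ?U'" using card_aff_indep_le[OF W'(2) _ sub] fin by simp
  then show False using W'(3) cU u1(1) d1 fin by simp
qed


definition mv :: "nat \<Rightarrow> (nat \<Rightarrow> real) \<Rightarrow> real \<Rightarrow> (nat \<Rightarrow> real)" where
  "mv d x t = (\<lambda>i. if i = d - 1 then x i - t else x i)"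

lemma mv_Rn: "d \<ge> 1 \<Longrightarrow> x \<in> Rn d \<Longrightarrow> mv d x t \<in> Rn d"
  by (auto simp: mv_def Rn_def)

lemma mv_comb: "(\<lambda>i. (1 - s) * x i + s * mv d x t i) = mv d x (s * t)"
  by (auto simp: mv_def fun_eq_iff algebra_simps)

lemma mv_ne: "t \<noteq> 0 \<Longrightarrow> mv d x t \<noteq> x"
  by (auto simp: mv_def fun_eq_iff)

lemma proj_mv: "d \<ge> 1 \<Longrightarrow> projn d 1 (mv d x t) = projn d 1 x"
  by (auto simp: mv_def projn_def fun_eq_iff)

lemma Omega_intro: "d \<ge> 1 \<Longrightarrow> x \<in> S \<Longrightarrow> 0 < t \<Longrightarrow> mv d x t \<in> S \<Longrightarrow> x \<in> Omega d S"
  unfolding Omega_def NB_def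
  using proj_mv[of d x t] by (auto simp: mv_def dest!: bspec[where x="mv d x t"])

lemma Omega_dest:
  assumes "d \<ge> 1" "S \<subseteq> Rn d" "x \<in> Omega d S"
  shows "x \<in> S \<and> (\<exists>t>0. mv d x t \<in> S)"
proof -
  have xS: "x \<in> S" using assms(3) Omega_def by blast
  obtain x' where x': "x' \<in> S" "projn d 1 x' = projn d 1 x" "x' (d - 1) < x (d - 1)"
    using assms(3) unfolding Omega_def NB_def by (auto simp: not_le)
  have "x' = mv d x (x (d - 1) - x' (d - 1))"
  proof
    fix i
    show "x' i = mv d x (x (d - 1) - x' (d - 1)) i"
    proof (cases "i < d - 1")
      case True then show ?thesis using fun_cong[OF x'(2), of i] by (simp add: projn_def mv_def)
    next
      case False
      then have "i = d - 1 \<or> i \<ge> d" by auto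
      moreover have "x' \<in> Rn d" "x \<in> Rn d" using x'(1) xS assms(2) by auto
      ultimately show ?thesis by (auto simp: mv_def Rn_def)
    qed
  qed
  then show ?thesis using xS x' by (intro conjI exI[of _ "x (d - 1) - x' (d - 1)"]) auto
qed

lemma pigeon:
  assumes "finite I" "\<And>n::nat. \<exists>i\<in>I. Q n i"
  shows "\<exists>i\<in>I. infinite {n. Q n i}"
proof (rule ccontr)
  assume "\<not> ?thesis"
  then have "finite (\<Union>i\<in>I. {n. Q n i})" using assms(1) by auto
  moreover have "(\<Union>i\<in>I. {n. Q n i}) = UNIV" using assms(2) by auto
  ultimately show False by simp
qed

lemma finite_lattice_conv:
  assumes "finite V" "V \<subseteq> Rn d"
  shows "finite (lattice_pts d (conv V))"
proof -
  define B where "B = (\<Sum>k<d. \<Sum>v\<in>V. \<bar>v k\<bar>)"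
  have bnd: "\<And>y k. y \<in> conv V \<Longrightarrow> k < d \<Longrightarrow> \<bar>y k\<bar> \<le> B"
  proof -
    fix y k assume y: "y \<in> conv V" and k: "k < d"
    obtain c where c: "\<forall>v\<in>V. 0 \<le> c v" "sum c V = 1" "y = (\<lambda>i. \<Sum>v\<in>V. c v * v i)"
      using y unfolding conv_def by blast
    have "\<bar>y k\<bar> \<le> (\<Sum>v\<in>V. \<bar>c v * v k\<bar>)" unfolding c(3) by (rule sum_abs)
    also have "\<dots> \<le> (\<Sum>v\<in>V. \<bar>v k\<bar>)"
    proof (rule sum_mono)
      fix v assume v: "v \<in> V"
      have "c v \<le> sum c V" using c(1) v assms(1) by (intro member_le_sum) auto
      then have "c v \<le> 1" using c(2) by simp
      then show "\<bar>c v * v k\<bar> \<le> \<bar>v k\<bar>" using c(1) v by (simp add: abs_mult mult_left_le_one_le)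
    qed
    also have "\<dots> \<le> B" unfolding B_def using k by (intro member_le_sum) (auto intro: sum_nonneg)
    finally show "\<bar>y k\<bar> \<le> B" .
  qed
  define N where "N = \<lceil>B\<rceil>"
  have "lattice_pts d (conv V) \<subseteq> (\<lambda>g i. if i < d then real_of_int (g i) else 0) ` (PiE {..<d} (\<lambda>_. {-N..N}))"
  proof
    fix y assume y: "y \<in> lattice_pts d (conv V)"
    then have yc: "y \<in> conv V" and yi: "\<forall>i<d. y i \<in> \<int>" unfolding lattice_pts_def by auto
    have yR: "y \<in> Rn d" using conv_Rn[OF assms(2)] yc by blast
    define g where "g = (\<lambda>i\<in>{..<d}. \<lfloor>y i\<rfloor>)"
    have "y = (\<lambda>i. if i < d then real_of_int (g i) else 0)"
    proof
      fix i show "y i = (if i < d then real_of_int (g i) else 0)"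
        using yi yR by (auto simp: g_def Rn_def elim!: Ints_cases)
    qed
    moreover have "g \<in> PiE {..<d} (\<lambda>_. {-N..N})"
    proof -
      have "\<And>i. i < d \<Longrightarrow> \<lfloor>y i\<rfloor> \<in> {-N..N}"
      proof -
        fix i assume i: "i < d"
        have "\<bar>y i\<bar> \<le> B" using bnd[OF yc i] .
        then have "- B \<le> y i" "y i \<le> B" by auto
        then have "\<lfloor>y i\<rfloor> \<le> \<lceil>B\<rceil>" "-\<lceil>B\<rceil> \<le> \<lfloor>y i\<rfloor>"
          by (meson floor_le_ceiling floor_mono order_trans, simp add: ceiling_def floor_mono)
        then show "\<lfloor>y i\<rfloor> \<in> {-N..N}" unfolding N_def by auto
      qed
      then show ?thesis unfolding g_def by auto
    qed
    ultimately show "y \<in> (\<lambda>g i. if i < d then real_of_int (g i) else 0) ` (PiE {..<d} (\<lambda>_. {-N..N}))"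
      by blast
  qed
  moreover have "finite (PiE {..<d} (\<lambda>_. {-N..N}))" by (intro finite_PiE) auto
  ultimately show ?thesis by (meson finite_imageI finite_subset)
qed


theorem mainTheorem5:
  fixes d m :: nat and P :: "(nat \<Rightarrow> real) set" and Ps :: "nat \<Rightarrow> (nat \<Rightarrow> real) set"
  assumes "d \<ge> 1"
    and "is_polytope d P"
    and "general_position d P"
    and "P = (\<Union>i\<in>{1..m}. Ps i)"
    and "\<And>i. i \<in> {1..m} \<Longrightarrow> is_simplex d (Ps i) \<and> vertices (Ps i) \<subseteq> vertices P"
    and "\<And>i j. i \<in> {1..m} \<Longrightarrow> j \<in> {1..m} \<Longrightarrow> i \<noteq> j \<Longrightarrow>
           Ps i \<inter> Ps j \<subseteq> boundary_d d (Ps i) \<inter> boundary_d d (Ps j)"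
  shows "(\<forall>x\<in>Rn d. indicator (Omega d P) x = (\<Sum>i\<in>{1..m}. indicator (Omega d (Ps i)) x :: real))
         \<and> card (lattice_pts d (Omega d P)) = (\<Sum>i\<in>{1..m}. card (lattice_pts d (Omega d (Ps i))))"
proof -
  note d1 = assms(1)
  have "\<exists>V. finite V \<and> V \<subseteq> Rn d \<and> P = conv V"
    using assms(2) unfolding is_polytope_def by (rule conjunct1)
  then obtain V where V: "finite V" "V \<subseteq> Rn d" "P = conv V" by blast
  have PR: "P \<subseteq> Rn d" using conv_Rn[OF V(2)] V(3) by simp
  have Pconv: "\<And>p q t. p \<in> P \<Longrightarrow> q \<in> P \<Longrightarrow> 0 \<le> t \<Longrightarrow> t \<le> 1 \<Longrightarrow> (\<lambda>i. (1 - t) * p i + t * q i) \<in> P"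
    using conv_convex[OF V(1)] V(3) by simp
  have "\<forall>i\<in>{1..m}. \<exists>W. smp d W \<and> Ps i = conv W"
  proof
    fix i assume "i \<in> {1..m}"
    then have "is_simplex d (Ps i)" using assms(5) by blast
    then obtain W where "W \<subseteq> Rn d" "aff_indep W" "card W = d + 1" "Ps i = conv W"
      unfolding is_simplex_def by blast
    then show "\<exists>W. smp d W \<and> Ps i = conv W" unfolding smp_def by blast
  qed
  from bchoice[OF this] obtain W where W0: "\<forall>i\<in>{1..m}. smp d (W i) \<and> Ps i = conv (W i)" by blast
  have W: "\<And>i. i \<in> {1..m} \<Longrightarrow> smp d (W i) \<and> Ps i = conv (W i)" using W0 by blast
  have PsR: "\<And>i. i \<in> {1..m} \<Longrightarrow> Ps i \<subseteq> Rn d"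
  proof -
    fix i assume "i \<in> {1..m}"
    then have "smp d (W i)" "Ps i = conv (W i)" using W by auto
    then show "Ps i \<subseteq> Rn d" using conv_Rn smp.WRn by metis
  qed
  have PsP: "\<And>i. i \<in> {1..m} \<Longrightarrow> Ps i \<subseteq> P" using assms(4) by blast
  have C: "\<And>x i. i \<in> {1..m} \<Longrightarrow> x \<in> Omega d (Ps i) \<Longrightarrow> x \<in> Omega d P"
  proof -
    fix x i assume i: "i \<in> {1..m}" and x: "x \<in> Omega d (Ps i)"
    obtain t where "x \<in> Ps i" "0 < t" "mv d x t \<in> Ps i" using Omega_dest[OF d1 PsR[OF i] x] by blast
    then show "x \<in> Omega d P" using PsP[OF i] by (intro Omega_intro[OF d1]) auto
  qed
  have A: "\<And>x. x \<in> Omega d P \<Longrightarrow> \<exists>i\<in>{1..m}. x \<in> Omega d (Ps i)"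
  proof -
    fix x assume xO: "x \<in> Omega d P"
    obtain t where t: "x \<in> P" "0 < t" "mv d x t \<in> P" using Omega_dest[OF d1 PR xO] by blast
    have xR: "x \<in> Rn d" using t PR by blast
    have qR: "mv d x t \<in> Rn d" using mv_Rn[OF d1 xR] .
    define z where "z n = mv d x (t / (real n + 1))" for n :: nat
    have zc: "z n = (\<lambda>i. (1 - 1 / (real n + 1)) * x i + 1 / (real n + 1) * mv d x t i)" for n
      unfolding z_def mv_comb by simp
    have zP: "z n \<in> P" for n
      unfolding zc by (rule Pconv[OF t(1) t(3)]) auto
    then have zex: "\<And>n. \<exists>i\<in>{1..m}. z n \<in> Ps i" using assms(4) by blast
    have "\<exists>i\<in>{1..m}. infinite {n. z n \<in> Ps i}"
      using pigeon[of "{1..m}" "\<lambda>n i. z n \<in> Ps i"] zex by simp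
    then obtain i where i: "i \<in> {1..m}" "infinite {n. z n \<in> Ps i}" by blast
    interpret S: smp d "W i" using W[OF i(1)] by blast
    have PsW: "Ps i = conv (W i)" using W[OF i(1)] by blast
    have "\<forall>w\<in>W i. 0 \<le> S.bc x w"
    proof (rule ccontr)
      assume "\<not> (\<forall>w\<in>W i. 0 \<le> S.bc x w)"
      then obtain w where w: "w \<in> W i" "S.bc x w < 0" by auto
      define D where "D = \<bar>S.bc (mv d x t) w - S.bc x w\<bar> + 1"
      have Dpos: "0 < D" unfolding D_def by simp
      obtain N :: nat where N: "D / (- S.bc x w) < real N" using reals_Archimedean2 by blast
      obtain n where n: "n \<ge> N" "z n \<in> Ps i" using i(2) unfolding infinite_nat_iff_unbounded_le by blast
      have "0 \<le> S.bc (z n) w" using n(2) PsW S.conv_iff w(1) by blast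
      also have "S.bc (z n) w = (1 - 1 / (real n + 1)) * S.bc x w + 1 / (real n + 1) * S.bc (mv d x t) w"
        unfolding zc by (rule S.bc_comb[OF xR qR w(1)])
      finally have "0 \<le> S.bc x w + (S.bc (mv d x t) w - S.bc x w) / (real n + 1)"
        by (simp add: algebra_simps diff_divide_distrib)
      then have "- S.bc x w * (real n + 1) \<le> (S.bc (mv d x t) w - S.bc x w)"
        by (simp add: field_simps)
      also have "\<dots> < D" unfolding D_def by simp
      also have "D < - S.bc x w * real N" using N w(2) by (simp add: field_simps)
      also have "\<dots> \<le> - S.bc x w * (real n + 1)" using n(1) w(2) by (intro mult_left_mono) auto
      finally show False by simp
    qed
    then have "x \<in> Ps i" using PsW S.conv_iff xR by blast
    moreover obtain n where "z n \<in> Ps i" using i(2) not_finite_existsD by auto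
    ultimately have "x \<in> Omega d (Ps i)"
      by (intro Omega_intro[OF d1, of x _ "t / (real n + 1)"]) (auto simp: z_def t(2))
    then show "\<exists>i\<in>{1..m}. x \<in> Omega d (Ps i)" using i(1) by blast
  qed
  have B: "\<And>x i j. i \<in> {1..m} \<Longrightarrow> j \<in> {1..m} \<Longrightarrow> i \<noteq> j \<Longrightarrow> x \<in> Omega d (Ps i) \<Longrightarrow> x \<in> Omega d (Ps j) \<Longrightarrow> False"
  proof -
    fix x i j assume i: "i \<in> {1..m}" and j: "j \<in> {1..m}" and ij: "i \<noteq> j"
      and xi: "x \<in> Omega d (Ps i)" and xj: "x \<in> Omega d (Ps j)"
    obtain t1 where t1: "x \<in> Ps i" "0 < t1" "mv d x t1 \<in> Ps i" using Omega_dest[OF d1 PsR[OF i] xi] by blast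
    obtain t2 where t2: "x \<in> Ps j" "0 < t2" "mv d x t2 \<in> Ps j" using Omega_dest[OF d1 PsR[OF j] xj] by blast
    define s where "s = min t1 t2"
    have spos: "0 < s" using t1 t2 s_def by simp
    have shrink: "\<And>k t. k \<in> {1..m} \<Longrightarrow> x \<in> Ps k \<Longrightarrow> 0 < t \<Longrightarrow> mv d x t \<in> Ps k \<Longrightarrow> s \<le> t \<Longrightarrow> mv d x s \<in> Ps k"
    proof -
      fix k t assume k: "k \<in> {1..m}" "x \<in> Ps k" "0 < t" "mv d x t \<in> Ps k" "s \<le> t"
      have fk: "finite (W k)" using W[OF k(1)] smp.finW by blast
      have "(\<lambda>i. (1 - s / t) * x i + s / t * mv d x t i) \<in> Ps k"
        using W[OF k(1)] conv_convex[OF fk, of x "mv d x t" "s / t"] k spos by auto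
      then show "mv d x s \<in> Ps k" unfolding mv_comb using k(3) by simp
    qed
    have qi: "mv d x s \<in> Ps i" using shrink[OF i t1(1) t1(2) t1(3)] s_def by simp
    have qj: "mv d x s \<in> Ps j" using shrink[OF j t2(1) t2(2) t2(3)] s_def by simp
    define y where "y = mv d x (1 / 2 * s)"
    have yc: "y = (\<lambda>k. (1 - 1 / 2) * x k + 1 / 2 * mv d x s k)" unfolding y_def mv_comb ..
    interpret S: smp d "W i" using W[OF i] by blast
    have PsW: "Ps i = conv (W i)" using W[OF i] by blast
    have xR: "x \<in> Rn d" and qR: "mv d x s \<in> Rn d" using t1(1) qi PsR[OF i] by auto
    have "\<forall>w\<in>W i. 0 < S.bc y w"
    proof
      fix w assume w: "w \<in> W i"
      have bx: "0 \<le> S.bc x w" using t1(1) PsW S.conv_iff w by blast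
      have bq: "0 \<le> S.bc (mv d x s) w" using qi PsW S.conv_iff w by blast
      have bcy: "S.bc y w = (1 - 1 / 2) * S.bc x w + 1 / 2 * S.bc (mv d x s) w"
        unfolding yc by (rule S.bc_comb[OF xR qR w])
      show "0 < S.bc y w"
      proof (rule ccontr)
        assume "\<not> 0 < S.bc y w"
        then have z1: "S.bc x w = 0" and z2: "S.bc (mv d x s) w = 0" using bx bq by (simp_all add: bcy)
        let ?U = "W i - {w}"
        have xU: "x \<in> conv ?U" using S.conv_facet[OF _ w z1] t1(1) PsW by blast
        have qU: "mv d x s \<in> conv ?U" using S.conv_facet[OF _ w z2] qi PsW by blast
        have cU: "card ?U = d" using S.Wcard S.finW w by simp
        have finU: "finite ?U" using S.finW by simp
        have ns: "\<not> is_simplex (d - 1) (projn d 1 ` conv ?U)"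
          using facet_inj[OF d1 finU cU qU xU mv_ne proj_mv[OF d1]] spos by simp
        have Uv: "?U \<subseteq> vertices P"
        proof -
          have "?U \<subseteq> vertices (conv (W i))" using vert_conv[OF S.Wai] by blast
          moreover have "vertices (conv (W i)) \<subseteq> vertices P" using assms(5)[OF i] PsW by simp
          ultimately show ?thesis by blast
        qed
        have gp: "\<forall>k U. k \<le> d - 1 \<longrightarrow> U \<subseteq> vertices P \<longrightarrow> card U = k + 1 \<longrightarrow>
            is_simplex k (projn d (d - k) ` conv U)" using assms(3) unfolding general_position_def by blast
        have "d - 1 + 1 = d" using d1 by simp
        then have "is_simplex (d - 1) (projn d (d - (d - 1)) ` conv ?U)"
          using gp[rule_format, of "d - 1" ?U] Uv cU by simp
        moreover have "d - (d - 1) = 1" using d1 by simp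
        ultimately show False using ns by simp
      qed
    qed
    then have "y \<in> interior_d d (Ps i)" using S.interior[of y] PsW mv_Rn[OF d1 xR] y_def by simp
    moreover have "y \<in> Ps i \<inter> Ps j"
    proof -
      have "y \<in> Ps i" using conv_convex[OF S.finW, of x "mv d x s" "1/2"] t1(1) qi PsW yc by simp
      moreover have "y \<in> Ps j"
      proof -
        interpret T: smp d "W j" using W[OF j] by blast
        show ?thesis using conv_convex[OF T.finW, of x "mv d x s" "1/2"] t2(1) qj W[OF j] yc by simp
      qed
      ultimately show ?thesis by simp
    qed
    ultimately show False using assms(6)[OF i j ij] unfolding boundary_d_def by blast
  qed
  have part1: "\<forall>x\<in>Rn d. indicator (Omega d P) x = (\<Sum>i\<in>{1..m}. indicator (Omega d (Ps i)) x :: real)"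
  proof
    fix x assume xR: "x \<in> Rn d"
    have cnt: "(\<Sum>i\<in>{1..m}. indicator (Omega d (Ps i)) x :: real) = (\<Sum>i\<in>{i\<in>{1..m}. x \<in> Omega d (Ps i)}. 1)"
      by (simp add: indicator_def sum.inter_filter) (rule arg_cong[where f=card], auto)
    show "indicator (Omega d P) x = (\<Sum>i\<in>{1..m}. indicator (Omega d (Ps i)) x :: real)"
    proof (cases "x \<in> Omega d P")
      case True
      then obtain i where i: "i \<in> {1..m}" "x \<in> Omega d (Ps i)" using A by blast
      have "{i\<in>{1..m}. x \<in> Omega d (Ps i)} = {i}" using i B by blast
      then show ?thesis unfolding cnt using True by simp
    next
      case False
      then have "{i\<in>{1..m}. x \<in> Omega d (Ps i)} = {}" using C by blast
      then show ?thesis unfolding cnt using False by simp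
    qed
  qed
  have LU: "lattice_pts d (Omega d P) = (\<Union>i\<in>{1..m}. lattice_pts d (Omega d (Ps i)))"
    unfolding lattice_pts_def using A C by blast
  have finL: "finite (lattice_pts d (Omega d P))"
  proof -
    have "lattice_pts d (Omega d P) \<subseteq> lattice_pts d (conv V)"
      unfolding lattice_pts_def Omega_def using V(3) by blast
    then show ?thesis using finite_lattice_conv[OF V(1,2)] finite_subset by blast
  qed
  have "card (lattice_pts d (Omega d P)) = (\<Sum>i\<in>{1..m}. card (lattice_pts d (Omega d (Ps i))))"
    unfolding LU
  proof (rule card_UN_disjoint)
    show "finite {1..m}" by simp
    show "\<forall>i\<in>{1..m}. finite (lattice_pts d (Omega d (Ps i)))"
      using finL unfolding LU by (meson UN_I finite_subset subsetI)
    show "\<forall>i\<in>{1..m}. \<forall>j\<in>{1..m}. i \<noteq> j \<longrightarrow> lattice_pts d (Omega d (Ps i)) \<inter> lattice_pts d (Omega d (Ps j)) = {}"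
      unfolding lattice_pts_def using B by blast
  qed
  then show ?thesis using part1 by blast
qed

end
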